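(* Let $R=\bigoplus_{s\in S}R_s$ be an $S$-graded ring inducing $S$ which is graded von Neumann regular. Then: (i) every homogeneous right (resp. left) ideal $I$ of $R$ satisfies $I^2=I$; (ii) every homogeneous two-sided ideal of $R$ is graded semiprime. If moreover $R$ is nearly epsilon-strongly graded, then: (iii) the graded Jacobson radical $J^g(R)$ is zero.
   Context: Rings are associative, not necessarily unital. $S$-graded ring inducing $S$: $S$ a partial groupoid, $R=\bigoplus_{s\in S}R_s$, $R_sR_t\subseteq R_{st}$ when $st$ defined, $R_sR_t\ne0$ implies $st$ defined. Convention: $0\in S$, $R_0=0$, $S\setminus\{0\}=\{s:R_s\ne0\}$, undefined products set to $0$, $0$ absorbing. $H_R=\bigcup_sR_s$. An ideal $J$ is homogeneous if $J=\bigoplus_s(J\cap R_s)$. A homogeneous two-sided ideal $P$ is graded semiprime if for every homogeneous two-sided ideal $I$ and positive integer $n$, $I^n\subseteq P$ implies $I\subseteq P$. $R$ is graded von Neumann regular if $x\in xRx$ for all $x\in H_R$. $S$ cancellative: $0\ne su=tu$ or $0\ne us=ut$ implies $s=t$. (LRI): for every $s$ there exist $s^{-1}$ and idempotents $e,f$ with $es=sf=s$, $fs^{-1}=s^{-1}e=s^{-1}$, $ss^{-1}=e$, $s^{-1}s=f$. $R$ is nearly epsilon-strongly graded if $S$ is cancellative, satisfies (LRI), and for every $s$ and $x\in R_s$ there exist $\epsilon(x)\in R_sR_{s^{-1}}$, $\epsilon'(x)\in R_{s^{-1}}R_s$ (additive subgroups generated by products) with $\epsilon(x)x=x=x\epsilon'(x)$.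 Graded Jacobson radical (for cancellative $S$): a homogeneous right ideal $M$ is graded modular if there is $u\in H_R$ with $ux-x\in M$ for all $x\in H_R$; a graded maximal modular right ideal is a graded modular right ideal that is maximal among proper homogeneous right ideals; $J^g(R)$ is the intersection of all graded maximal modular right ideals (equal to $R$ if there are none). *)

theory Defs
  imports Main
begin

text \<open>The ring R is the whole carrier of a type of class ring (associative,
 not necessarily unital). The partial groupoid S is the whole type 's, with a
 total multiplication smul in which the distinguished element z plays the role
 of 0 (undefined products are z, z absorbing).\<close>

inductive_set add_gen :: "'a::ring set \<Rightarrow> 'a set" for X where
  zero: "0 \<in> add_gen X"
| base: "x \<in> X \<Longrightarrow> x \<in> add_gen X"
| diff: "a \<in> add_gen X \<Longrightarrow> b \<in> add_gen X \<Longrightarrow> a - b \<in> add_gen X"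

definition setmul :: "'a::ring set \<Rightarrow> 'a set \<Rightarrow> 'a set" where
  "setmul A B = add_gen {a * b | a b. a \<in> A \<and> b \<in> B}"

text \<open>Powers I^n for n \<ge> 1 (the value at 0 is irrelevant).\<close>
fun ideal_pow :: "'a::ring set \<Rightarrow> nat \<Rightarrow> 'a set" where
  "ideal_pow I 0 = UNIV"
| "ideal_pow I (Suc 0) = I"
| "ideal_pow I (Suc (Suc n)) = setmul (ideal_pow I (Suc n)) I"

definition add_subgroup :: "'a::ring set \<Rightarrow> bool" where
  "add_subgroup A \<longleftrightarrow> 0 \<in> A \<and> (\<forall>a\<in>A. \<forall>b\<in>A. a - b \<in> A)"

definition right_ideal :: "'a::ring set \<Rightarrow> bool" where
  "right_ideal J \<longleftrightarrow> add_subgroup J \<and> (\<forall>a\<in>J. \<forall>r. a * r \<in> J)"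

definition left_ideal :: "'a::ring set \<Rightarrow> bool" where
  "left_ideal J \<longleftrightarrow> add_subgroup J \<and> (\<forall>a\<in>J. \<forall>r. r * a \<in> J)"

definition two_sided_ideal :: "'a::ring set \<Rightarrow> bool" where
  "two_sided_ideal J \<longleftrightarrow> right_ideal J \<and> left_ideal J"

definition graded_ring_inducing :: "('s \<Rightarrow> 's \<Rightarrow> 's) \<Rightarrow> 's \<Rightarrow> ('s \<Rightarrow> 'a::ring set) \<Rightarrow> bool" where
  "graded_ring_inducing smul z Rs \<longleftrightarrow>
     (\<forall>s. smul z s = z \<and> smul s z = z) \<and>
     (\<forall>s. add_subgroup (Rs s)) \<and>
     Rs z = {0} \<and>
     (\<forall>s. s \<noteq> z \<longrightarrow> Rs s \<noteq> {0}) \<and>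
     (\<forall>x. \<exists>!f. (\<forall>s. f s \<in> Rs s) \<and> finite {s. f s \<noteq> 0} \<and> x = (\<Sum>s\<in>{s. f s \<noteq> 0}. f s)) \<and>
     (\<forall>s t a b. a \<in> Rs s \<longrightarrow> b \<in> Rs t \<longrightarrow> a * b \<in> Rs (smul s t))"

definition homog_elems :: "('s \<Rightarrow> 'a::ring set) \<Rightarrow> 'a set" where
  "homog_elems Rs = (\<Union>s. Rs s)"

definition homogeneous :: "('s \<Rightarrow> 'a::ring set) \<Rightarrow> 'a set \<Rightarrow> bool" where
  "homogeneous Rs J \<longleftrightarrow>
     (\<forall>x\<in>J. \<exists>f. (\<forall>s. f s \<in> J \<inter> Rs s) \<and> finite {s. f s \<noteq> 0} \<and> x = (\<Sum>s\<in>{s. f s \<noteq> 0}. f s))"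

definition graded_vnr :: "('s \<Rightarrow> 'a::ring set) \<Rightarrow> bool" where
  "graded_vnr Rs \<longleftrightarrow> (\<forall>x\<in>homog_elems Rs. \<exists>r. x = x * r * x)"

definition graded_semiprime :: "('s \<Rightarrow> 'a::ring set) \<Rightarrow> 'a set \<Rightarrow> bool" where
  "graded_semiprime Rs P \<longleftrightarrow> homogeneous Rs P \<and> two_sided_ideal P \<and>
     (\<forall>I n. homogeneous Rs I \<longrightarrow> two_sided_ideal I \<longrightarrow> n > 0 \<longrightarrow>
        ideal_pow I n \<subseteq> P \<longrightarrow> I \<subseteq> P)"

definition cancellative :: "('s \<Rightarrow> 's \<Rightarrow> 's) \<Rightarrow> 's \<Rightarrow> bool" where
  "cancellative smul z \<longleftrightarrow>
     (\<forall>s t u. (smul s u \<noteq> z \<and> smul s u = smul t u) \<longrightarrow> s = t) \<and>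
     (\<forall>s t u. (smul u s \<noteq> z \<and> smul u s = smul u t) \<longrightarrow> s = t)"

definition LRI_inv :: "('s \<Rightarrow> 's \<Rightarrow> 's) \<Rightarrow> 's \<Rightarrow> 's \<Rightarrow> bool" where
  "LRI_inv smul s s' \<longleftrightarrow> (\<exists>e f. smul e e = e \<and> smul f f = f \<and>
     smul e s = s \<and> smul s f = s \<and> smul f s' = s' \<and> smul s' e = s' \<and>
     smul s s' = e \<and> smul s' s = f)"

definition nearly_epsilon_strongly_graded ::
    "('s \<Rightarrow> 's \<Rightarrow> 's) \<Rightarrow> 's \<Rightarrow> ('s \<Rightarrow> 'a::ring set) \<Rightarrow> bool" where
  "nearly_epsilon_strongly_graded smul z Rs \<longleftrightarrow> cancellative smul z \<and>
     (\<forall>s. \<exists>s'. LRI_inv smul s s' \<and>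
        (\<forall>x\<in>Rs s. \<exists>\<epsilon> \<epsilon>'. \<epsilon> \<in> setmul (Rs s) (Rs s') \<and> \<epsilon>' \<in> setmul (Rs s') (Rs s) \<and>
            \<epsilon> * x = x \<and> x * \<epsilon>' = x))"

definition graded_modular :: "('s \<Rightarrow> 'a::ring set) \<Rightarrow> 'a set \<Rightarrow> bool" where
  "graded_modular Rs M \<longleftrightarrow> homogeneous Rs M \<and> right_ideal M \<and>
     (\<exists>u\<in>homog_elems Rs. \<forall>x\<in>homog_elems Rs. u * x - x \<in> M)"

definition graded_max_modular :: "('s \<Rightarrow> 'a::ring set) \<Rightarrow> 'a set \<Rightarrow> bool" where
  "graded_max_modular Rs M \<longleftrightarrow> graded_modular Rs M \<and> M \<noteq> UNIV \<and>
     (\<forall>N. homogeneous Rs N \<and> right_ideal N \<and> N \<noteq> UNIV \<and> M \<subseteq> N \<longrightarrow> N = M)"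

definition graded_jacobson :: "('s \<Rightarrow> 'a::ring set) \<Rightarrow> 'a set" where
  "graded_jacobson Rs = \<Inter> {M. graded_max_modular Rs M}"

end

theory Submission
  imports Defs
begin

lemma asg_add: "add_subgroup A \<Longrightarrow> a \<in> A \<Longrightarrow> b \<in> A \<Longrightarrow> a + b \<in> A"
  unfolding add_subgroup_def by (metis diff_0 diff_minus_eq_add)

lemma asg_sum:
  assumes A: "add_subgroup A" and fin: "finite T" and g: "\<forall>t\<in>T. g t \<in> A"
  shows "sum g T \<in> A"
  using fin g
proof (induction T rule: finite_induct)
  case empty then show ?case using A by (simp add: add_subgroup_def)
next
  case (insert x F) then show ?case using A by (simp add: asg_add)
qed

lemma ag_sub: "add_subgroup (add_gen X)"
  unfolding add_subgroup_def by (auto intro: add_gen.intros)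

lemma ag_min: "add_subgroup A \<Longrightarrow> X \<subseteq> A \<Longrightarrow> add_gen X \<subseteq> A"
proof
  fix x assume a: "add_subgroup A" "X \<subseteq> A" and xx: "x \<in> add_gen X"
  from xx show "x \<in> A" using a by (induction rule: add_gen.induct) (auto simp: add_subgroup_def)
qed

lemma ri_sub: "right_ideal J \<Longrightarrow> add_subgroup J" by (simp add: right_ideal_def)
lemma li_sub: "left_ideal J \<Longrightarrow> add_subgroup J" by (simp add: left_ideal_def)

locale gr =
  fixes smul :: "'s \<Rightarrow> 's \<Rightarrow> 's" and z :: 's and Rs :: "'s \<Rightarrow> 'a::ring set"
  assumes gri: "graded_ring_inducing smul z Rs"
begin

lemma sub: "add_subgroup (Rs s)" using gri unfolding graded_ring_inducing_def by blast
lemma Rz: "Rs z = {0}" using gri unfolding graded_ring_inducing_def by blast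
lemma mulR: "a \<in> Rs s \<Longrightarrow> b \<in> Rs t \<Longrightarrow> a * b \<in> Rs (smul s t)"
  using gri unfolding graded_ring_inducing_def by blast
lemma zs: "smul z s = z" using gri unfolding graded_ring_inducing_def by blast
lemma dec: "\<exists>!f. (\<forall>s. f s \<in> Rs s) \<and> finite {s. f s \<noteq> 0} \<and> x = (\<Sum>s\<in>{s. f s \<noteq> 0}. f s)"
  using gri unfolding graded_ring_inducing_def by blast
lemma zeroR: "0 \<in> Rs s" using sub[of s] by (simp add: add_subgroup_def)

definition pr :: "'a \<Rightarrow> 's \<Rightarrow> 'a" where
  "pr x = (THE f. (\<forall>s. f s \<in> Rs s) \<and> finite {s. f s \<noteq> 0} \<and> x = (\<Sum>s\<in>{s. f s \<noteq> 0}. f s))"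

lemma pr_props: "(\<forall>s. pr x s \<in> Rs s) \<and> finite {s. pr x s \<noteq> 0} \<and> x = (\<Sum>s\<in>{s. pr x s \<noteq> 0}. pr x s)"
  unfolding pr_def by (rule theI'[OF dec])

lemma pr_unique:
  assumes "\<forall>t. f t \<in> Rs t" "finite A" "\<forall>t. t \<notin> A \<longrightarrow> f t = 0" "x = sum f A"
  shows "pr x = f"
proof -
  have ss: "{t. f t \<noteq> 0} \<subseteq> A" using assms(3) by blast
  hence fin: "finite {t. f t \<noteq> 0}" using assms(2) finite_subset by blast
  have "sum f A = sum f {t. f t \<noteq> 0}"
    by (rule sum.mono_neutral_right) (use assms(2) ss in auto)
  hence "(\<forall>s. f s \<in> Rs s) \<and> finite {s. f s \<noteq> 0} \<and> x = (\<Sum>s\<in>{s. f s \<noteq> 0}. f s)"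
    using assms fin by simp
  thus ?thesis unfolding pr_def by (rule the1_equality[OF dec])
qed

lemma pr_sum_over:
  assumes "finite A" "{t. pr x t \<noteq> 0} \<subseteq> A"
  shows "x = sum (pr x) A"
proof -
  have "sum (pr x) A = sum (pr x) {t. pr x t \<noteq> 0}"
    by (rule sum.mono_neutral_right) (use assms in auto)
  thus ?thesis using pr_props[of x] by simp
qed

lemma pr_add: "pr (x + y) = (\<lambda>t. pr x t + pr y t)"
proof (rule pr_unique)
  let ?A = "{t. pr x t \<noteq> 0} \<union> {t. pr y t \<noteq> 0}"
  show "\<forall>t. pr x t + pr y t \<in> Rs t" using pr_props asg_add sub by blast
  show "finite ?A" using pr_props by blast
  show "\<forall>t. t \<notin> ?A \<longrightarrow> pr x t + pr y t = 0" by auto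
  have "x = sum (pr x) ?A" by (rule pr_sum_over) (use pr_props in auto)
  moreover have "y = sum (pr y) ?A" by (rule pr_sum_over) (use pr_props in auto)
  ultimately show "x + y = (\<Sum>t\<in>?A. pr x t + pr y t)" by (simp add: sum.distrib)
qed

lemma pr_zero: "pr 0 = (\<lambda>t. 0)"
  by (rule pr_unique) (auto simp: zeroR)

lemma pr_sumg: "finite T \<Longrightarrow> pr (sum g T) s = (\<Sum>t\<in>T. pr (g t) s)"
proof (induction T rule: finite_induct)
  case empty then show ?case by (simp add: pr_zero)
next
  case (insert x F) then show ?case by (simp add: pr_add)
qed

lemma pr_hom: assumes "y \<in> Rs \<sigma>" shows "pr y s = (if s = \<sigma> then y else 0)"
proof -
  have "pr y = (\<lambda>t. if t = \<sigma> then y else 0)"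
    by (rule pr_unique[where A="{\<sigma>}"]) (auto simp: assms zeroR)
  thus ?thesis by simp
qed

lemma hom_pr: "homogeneous Rs J \<Longrightarrow> x \<in> J \<Longrightarrow> pr x s \<in> J"
proof -
  assume h: "homogeneous Rs J" and x: "x \<in> J"
  then obtain f where f: "\<forall>s. f s \<in> J \<inter> Rs s" "finite {s. f s \<noteq> 0}" "x = (\<Sum>s\<in>{s. f s \<noteq> 0}. f s)"
    unfolding homogeneous_def by blast
  have "pr x = f" by (rule pr_unique[where A="{s. f s \<noteq> 0}"]) (use f in auto)
  thus ?thesis using f by auto
qed

lemma idem_right:
  assumes vnr: "graded_vnr Rs" and h: "homogeneous Rs I" and ri: "right_ideal I"
  shows "setmul I I = I"
proof
  show "setmul I I \<subseteq> I" unfolding setmul_def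
    by (rule ag_min) (use ri in \<open>auto simp: right_ideal_def\<close>)
  show "I \<subseteq> setmul I I"
  proof
    fix x assume x: "x \<in> I"
    have "\<forall>t\<in>{t. pr x t \<noteq> 0}. pr x t \<in> setmul I I"
    proof
      fix t
      have y: "pr x t \<in> I" using hom_pr[OF h x] .
      have "pr x t \<in> homog_elems Rs" using pr_props unfolding homog_elems_def by blast
      then obtain r where r: "pr x t = pr x t * r * pr x t" using vnr unfolding graded_vnr_def by blast
      have "pr x t * r \<in> I" using ri y unfolding right_ideal_def by blast
      hence "pr x t \<in> {a * b |a b. a \<in> I \<and> b \<in> I}" using y r by blast
      thus "pr x t \<in> setmul I I" unfolding setmul_def by (rule add_gen.base)
    qed
    hence "sum (pr x) {t. pr x t \<noteq> 0} \<in> setmul I I"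
      using asg_sum[OF ag_sub] pr_props unfolding setmul_def by blast
    thus "x \<in> setmul I I" using pr_props[of x] by simp
  qed
qed

lemma idem_left:
  assumes vnr: "graded_vnr Rs" and h: "homogeneous Rs I" and ri: "left_ideal I"
  shows "setmul I I = I"
proof
  show "setmul I I \<subseteq> I" unfolding setmul_def
    by (rule ag_min) (use ri in \<open>auto simp: left_ideal_def\<close>)
  show "I \<subseteq> setmul I I"
  proof
    fix x assume x: "x \<in> I"
    have "\<forall>t\<in>{t. pr x t \<noteq> 0}. pr x t \<in> setmul I I"
    proof
      fix t
      have y: "pr x t \<in> I" using hom_pr[OF h x] .
      have "pr x t \<in> homog_elems Rs" using pr_props unfolding homog_elems_def by blast
      then obtain r where r: "pr x t = pr x t * r * pr x t" using vnr unfolding graded_vnr_def by blast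
      have "r * pr x t \<in> I" using ri y unfolding left_ideal_def by blast
      hence "pr x t \<in> {a * b |a b. a \<in> I \<and> b \<in> I}" using y r by (metis (mono_tags, lifting) mult.assoc mem_Collect_eq)
      thus "pr x t \<in> setmul I I" unfolding setmul_def by (rule add_gen.base)
    qed
    hence "sum (pr x) {t. pr x t \<noteq> 0} \<in> setmul I I"
      using asg_sum[OF ag_sub] pr_props unfolding setmul_def by blast
    thus "x \<in> setmul I I" using pr_props[of x] by simp
  qed
qed

lemma semiprime:
  assumes vnr: "graded_vnr Rs" and h: "homogeneous Rs P" and tp: "two_sided_ideal P"
  shows "graded_semiprime Rs P"
proof -
  have "ideal_pow I (Suc n) = I" if "homogeneous Rs I" "two_sided_ideal I" for I and n :: nat
  proof (induction n)
    case 0 then show ?case by simp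
  next
    case (Suc n)
    have "setmul I I = I" using idem_right[OF vnr that(1)] that(2) unfolding two_sided_ideal_def by blast
    then show ?case using Suc by simp
  qed
  then show ?thesis unfolding graded_semiprime_def using h tp
    by (metis gr0_conv_Suc)
qed


lemma jac:
  assumes vnr: "graded_vnr Rs" and ne: "nearly_epsilon_strongly_graded smul z Rs"
  shows "graded_jacobson Rs = {0}"
proof
  show "{0} \<subseteq> graded_jacobson Rs"
    unfolding graded_jacobson_def graded_max_modular_def graded_modular_def right_ideal_def add_subgroup_def
    by blast
  show "graded_jacobson Rs \<subseteq> {0}"
  proof
    fix x assume xJ: "x \<in> graded_jacobson Rs"
    show "x \<in> {0}"
    proof (rule ccontr)
      assume "x \<notin> {0}"
      hence "x \<noteq> 0" by simp
      have "\<exists>s. pr x s \<noteq> 0"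
      proof (rule ccontr)
        assume "\<not> (\<exists>s. pr x s \<noteq> 0)"
        hence "{s. pr x s \<noteq> 0} = {}" by simp
        thus False using pr_props[of x] \<open>x \<noteq> 0\<close> by simp
      qed
      then obtain s where as: "pr x s \<noteq> 0" by blast
      define a where "a = pr x s"
      have aR: "a \<in> Rs s" unfolding a_def using pr_props by blast
      have a0: "a \<noteq> 0" using as a_def by simp
      have canc: "cancellative smul z" using ne unfolding nearly_epsilon_strongly_graded_def by blast
      have canc1: "\<forall>s t u. (smul s u \<noteq> z \<and> smul s u = smul t u) \<longrightarrow> s = t"
        using canc unfolding cancellative_def by blast
      have canc2: "\<forall>s t u. (smul u s \<noteq> z \<and> smul u s = smul u t) \<longrightarrow> s = t"
        using canc unfolding cancellative_def by blast
      obtain s' where "LRI_inv smul s s'" using ne unfolding nearly_epsilon_strongly_graded_def by blast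
      then obtain e where es: "smul e s = s" and sse: "smul s s' = e" unfolding LRI_inv_def by blast
      have snz: "s \<noteq> z" using aR a0 Rz by auto
      have enz: "e \<noteq> z"
      proof
        assume "e = z" hence "smul e s = z" using zs by simp
        thus False using es snz by simp
      qed
      obtain r where r: "a = a * r * a" using vnr aR unfolding graded_vnr_def homog_elems_def by blast
      have key: "pr (a * y * a) s = (if t = s' then a * y * a else 0)" if y: "y \<in> Rs t" for y t
      proof -
        have m: "a * y * a \<in> Rs (smul (smul s t) s)" using mulR[OF mulR[OF aR y] aR] .
        show ?thesis
        proof (cases "t = s'")
          case True
          then show ?thesis using pr_hom[OF m] es sse by simp
        next
          case False
          have "s \<noteq> smul (smul s t) s"
          proof
            assume h: "s = smul (smul s t) s"
            hence "smul s t = e" using canc1[rule_format, of "smul s t" s e] snz es by simp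
            hence "t = s'" using canc2[rule_format, of s t s'] enz sse by simp
            thus False using False by simp
          qed
          then show ?thesis using pr_hom[OF m] False by simp
        qed
      qed
      define T where "T = {t. pr r t \<noteq> 0}"
      have finT: "finite T" unfolding T_def using pr_props by blast
      have rT: "r = (\<Sum>t\<in>T. pr r t)" using pr_props[of r] unfolding T_def by simp
      have "a * r * a = (\<Sum>t\<in>T. a * pr r t * a)"
        by (subst rT) (simp add: sum_distrib_left sum_distrib_right)
      hence "pr (a * r * a) s = (\<Sum>t\<in>T. pr (a * pr r t * a) s)" using pr_sumg[OF finT] by simp
      also have "\<dots> = (\<Sum>t\<in>T. if t = s' then a * pr r t * a else 0)"
        using key pr_props by (intro sum.cong) auto
      also have "\<dots> = a * pr r s' * a"
        using finT by (simp add: sum.delta T_def)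
      finally have "pr a s = a * pr r s' * a" using r by simp
      hence aba: "a = a * pr r s' * a" using pr_hom[OF aR] by simp
      define b where "b = pr r s'"
      have bR: "b \<in> Rs s'" unfolding b_def using pr_props by blast
      define u where "u = a * b"
      have uR: "u \<in> Rs e" unfolding u_def using mulR[OF aR bR] sse by simp
      have "u * u = (a * b * a) * b" unfolding u_def by (simp add: mult.assoc)
      hence uu: "u * u = u" using aba unfolding b_def u_def by simp
      have ua: "u * a = a" unfolding u_def using aba b_def by simp
      have u0: "u \<noteq> 0" using ua a0 by auto
      have key2: "u * y \<in> Rs t" if y: "y \<in> Rs t" for y t
      proof (cases "u * y = 0")
        case True then show ?thesis using zeroR by simp
      next
        case False
        have m1: "u * y \<in> Rs (smul e t)" using mulR[OF uR y] .
        have "u * (u * y) = (u * u) * y" by (simp add: mult.assoc)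
        hence "u * (u * y) = u * y" using uu by simp
        hence m2: "u * y \<in> Rs (smul e (smul e t))" using mulR[OF uR m1] by simp
        have "pr (u * y) (smul e t) = u * y" using pr_hom[OF m1] by simp
        hence eq: "smul e t = smul e (smul e t)" using pr_hom[OF m2, of "smul e t"] False by (simp split: if_splits)
        have "smul e t \<noteq> z" using m1 False Rz by auto
        hence "smul e t = t" using canc2[rule_format, of e "smul e t" t] eq by simp
        thus ?thesis using m1 by simp
      qed
      define M0 where "M0 = range (\<lambda>y. y - u * y)"
      have M0ri: "right_ideal M0"
        unfolding right_ideal_def add_subgroup_def M0_def
      proof (intro conjI ballI allI)
        show "0 \<in> range (\<lambda>y. y - u * y)" by (rule range_eqI[of _ _ 0]) simp
      next
        fix p q assume "p \<in> range (\<lambda>y. y - u * y)" "q \<in> range (\<lambda>y. y - u * y)"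
        then obtain y1 y2 where "p = y1 - u * y1" "q = y2 - u * y2" by blast
        hence "p - q = (y1 - y2) - u * (y1 - y2)" by (simp add: algebra_simps)
        thus "p - q \<in> range (\<lambda>y. y - u * y)" by blast
      next
        fix p c assume "p \<in> range (\<lambda>y. y - u * y)"
        then obtain y1 where "p = y1 - u * y1" by blast
        hence "p * c = (y1 * c) - u * (y1 * c)" by (simp add: left_diff_distrib mult.assoc)
        thus "p * c \<in> range (\<lambda>y. y - u * y)" by blast
      qed
      have M0h: "homogeneous Rs M0"
        unfolding homogeneous_def
      proof
        fix w assume "w \<in> M0"
        then obtain y where w: "w = y - u * y" unfolding M0_def by blast
        define f where "f = (\<lambda>t. pr y t - u * pr y t)"
        have f1: "\<forall>t. f t \<in> M0 \<inter> Rs t"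
        proof
          fix t
          have p: "pr y t \<in> Rs t" using pr_props by blast
          have "f t \<in> M0" unfolding f_def M0_def by blast
          moreover have "f t \<in> Rs t" unfolding f_def using key2[OF p] p sub[of t]
            unfolding add_subgroup_def by blast
          ultimately show "f t \<in> M0 \<inter> Rs t" by blast
        qed
        have ss: "{t. f t \<noteq> 0} \<subseteq> {t. pr y t \<noteq> 0}" unfolding f_def by auto
        have finy: "finite {t. pr y t \<noteq> 0}" using pr_props by blast
        have f2: "finite {t. f t \<noteq> 0}" using ss finy finite_subset by blast
        have "(\<Sum>t\<in>{t. f t \<noteq> 0}. f t) = (\<Sum>t\<in>{t. pr y t \<noteq> 0}. f t)"
          by (rule sum.mono_neutral_left) (use finy ss in auto)
        also have "\<dots> = (\<Sum>t\<in>{t. pr y t \<noteq> 0}. pr y t) - u * (\<Sum>t\<in>{t. pr y t \<noteq> 0}. pr y t)"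
          unfolding f_def by (simp add: sum_subtractf sum_distrib_left)
        also have "\<dots> = w" using w pr_props[of y] by simp
        finally have "w = (\<Sum>t\<in>{t. f t \<noteq> 0}. f t)" by simp
        thus "\<exists>f. (\<forall>s. f s \<in> M0 \<inter> Rs s) \<and> finite {s. f s \<noteq> 0} \<and> w = (\<Sum>s\<in>{s. f s \<noteq> 0}. f s)"
          using f1 f2 by blast
      qed
      have uM0: "u \<notin> M0"
      proof
        assume "u \<in> M0"
        then obtain y where uy: "u = y - u * y" unfolding M0_def by blast
        have e1: "u * u = u * (y - u * y)" by (rule arg_cong[where f="(*) u", OF uy])
        have e2: "u * (y - u * y) = u * y - (u * u) * y" by (simp add: right_diff_distrib mult.assoc)
        have "u * u = u * y - (u * u) * y" using e1 e2 by (rule trans)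
        hence "u = u * y - u * y" by (simp only: uu)
        hence "u * u = 0" using uu by simp
        thus False using uu u0 by simp
      qed
      have modM0: "u * y - y \<in> M0" for y
      proof -
        have "u * y - y = (- y) - u * (- y)" by simp
        thus ?thesis unfolding M0_def by blast
      qed
      define F where "F = {N. homogeneous Rs N \<and> right_ideal N \<and> M0 \<subseteq> N \<and> u \<notin> N}"
      have "\<exists>M\<in>F. \<forall>X\<in>F. M \<subseteq> X \<longrightarrow> X = M"
      proof (rule Zorn_Lemma2, intro ballI)
        fix C assume C: "C \<in> chains F"
        show "\<exists>U\<in>F. \<forall>X\<in>C. X \<subseteq> U"
        proof (cases "C = {}")
          case True
          have "M0 \<in> F" unfolding F_def using M0h M0ri uM0 by blast
          then show ?thesis using True by blast
        next
          case False
          have CF: "C \<subseteq> F" and ch: "\<forall>A\<in>C. \<forall>B\<in>C. A \<subseteq> B \<or> B \<subseteq> A"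
            using C unfolding chains_def chain_subset_def by auto
          have "\<Union>C \<in> F" unfolding F_def
          proof (intro CollectI conjI)
            show "homogeneous Rs (\<Union>C)" unfolding homogeneous_def
            proof
              fix w assume "w \<in> \<Union>C"
              then obtain N where N: "N \<in> C" "w \<in> N" by blast
              hence "homogeneous Rs N" using CF unfolding F_def by blast
              then obtain f where "\<forall>s. f s \<in> N \<inter> Rs s" "finite {s. f s \<noteq> 0}" "w = (\<Sum>s\<in>{s. f s \<noteq> 0}. f s)"
                using N unfolding homogeneous_def by blast
              thus "\<exists>f. (\<forall>s. f s \<in> \<Union>C \<inter> Rs s) \<and> finite {s. f s \<noteq> 0} \<and> w = (\<Sum>s\<in>{s. f s \<noteq> 0}. f s)"
                using N by blast
            qed
            show "right_ideal (\<Union>C)" unfolding right_ideal_def add_subgroup_def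
            proof (intro conjI ballI allI)
              obtain N where "N \<in> C" using False by blast
              thus "0 \<in> \<Union>C" using CF unfolding F_def right_ideal_def add_subgroup_def by blast
            next
              fix p q assume "p \<in> \<Union>C" "q \<in> \<Union>C"
              then obtain N1 N2 where N: "N1 \<in> C" "N2 \<in> C" "p \<in> N1" "q \<in> N2" by blast
              show "p - q \<in> \<Union>C"
              proof (cases "N1 \<subseteq> N2")
                case True
                then show ?thesis using N CF unfolding F_def right_ideal_def add_subgroup_def by blast
              next
                case False
                hence "N2 \<subseteq> N1" using ch N by blast
                then show ?thesis using N CF unfolding F_def right_ideal_def add_subgroup_def by blast
              qed
            next
              fix p c assume "p \<in> \<Union>C"
              then obtain N where N: "N \<in> C" "p \<in> N" by blast
              thus "p * c \<in> \<Union>C" using CF unfolding F_def right_ideal_def by blast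
            qed
            show "M0 \<subseteq> \<Union>C" using False CF unfolding F_def by blast
            show "u \<notin> \<Union>C" using CF unfolding F_def by blast
          qed
          then show ?thesis by blast
        qed
      qed
      then obtain M where MF: "M \<in> F" and Mmax: "\<forall>X\<in>F. M \<subseteq> X \<longrightarrow> X = M" by blast
      have uH: "u \<in> homog_elems Rs" using uR unfolding homog_elems_def by blast
      have "graded_max_modular Rs M"
        unfolding graded_max_modular_def graded_modular_def
      proof (intro conjI allI impI)
        show "homogeneous Rs M" "right_ideal M" using MF unfolding F_def by auto
        show "\<exists>u\<in>homog_elems Rs. \<forall>x\<in>homog_elems Rs. u * x - x \<in> M"
          using uH modM0 MF unfolding F_def by blast
        show "M \<noteq> UNIV" using MF unfolding F_def by blast
      next
        fix N assume N: "homogeneous Rs N \<and> right_ideal N \<and> N \<noteq> UNIV \<and> M \<subseteq> N"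
        have "u \<notin> N"
        proof
          assume uN: "u \<in> N"
          have "y \<in> N" for y
          proof -
            have "u * y \<in> N" using uN N unfolding right_ideal_def by blast
            moreover have "u * y - y \<in> N" using modM0 MF N unfolding F_def by blast
            ultimately have "u * y - (u * y - y) \<in> N" using N unfolding right_ideal_def add_subgroup_def by blast
            thus ?thesis by simp
          qed
          thus False using N by blast
        qed
        hence "N \<in> F" using N MF unfolding F_def by blast
        thus "N = M" using Mmax N by blast
      qed
      hence "x \<in> M" using xJ unfolding graded_jacobson_def by blast
      hence "a \<in> M" unfolding a_def using hom_pr MF unfolding F_def by blast
      hence "u \<in> M" unfolding u_def using MF unfolding F_def right_ideal_def by blast
      thus False using MF unfolding F_def by blast
    qed
  qed
qed
end

theorem proposition4p9:
  fixes smul :: "'s \<Rightarrow> 's \<Rightarrow> 's" and z :: 's and Rs :: "'s \<Rightarrow> 'a::ring set"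
  assumes "graded_ring_inducing smul z Rs" and "graded_vnr Rs"
  shows "(\<forall>I. homogeneous Rs I \<and> right_ideal I \<longrightarrow> setmul I I = I)
       \<and> (\<forall>I. homogeneous Rs I \<and> left_ideal I \<longrightarrow> setmul I I = I)
       \<and> (\<forall>P. homogeneous Rs P \<and> two_sided_ideal P \<longrightarrow> graded_semiprime Rs P)
       \<and> (nearly_epsilon_strongly_graded smul z Rs \<longrightarrow> graded_jacobson Rs = {0})"
proof -
  interpret gr smul z Rs using assms(1) by unfold_locales
  show ?thesis
  proof (intro conjI allI impI)
    fix I assume "homogeneous Rs I \<and> right_ideal I"
    thus "setmul I I = I" using idem_right[OF assms(2)] by blast
  next
    fix I assume "homogeneous Rs I \<and> left_ideal I"
    thus "setmul I I = I" using idem_left[OF assms(2)] by blast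
  next
    fix P assume "homogeneous Rs P \<and> two_sided_ideal P"
    thus "graded_semiprime Rs P" using semiprime[OF assms(2)] by blast
  next
    assume "nearly_epsilon_strongly_graded smul z Rs"
    thus "graded_jacobson Rs = {0}" using jac[OF assms(2)] by blast
  qed
qed

end
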